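(* For every positive integer $n$, $$\frac{n^2(n^2-1)}{6}\ \Big|\ \sum_{k=0}^{n-1}k(k+1)(8k+9)T_kT_{k+1}.$$
   Context: For $n\in\mathbb{N}$, the central trinomial coefficient $T_n$ is the constant term of $(1+x+x^{-1})^n$, i.e. $T_n=\sum_{k=0}^{\lfloor n/2\rfloor}\binom{n}{2k}\binom{2k}{k}$. Divisibility $a\mid m$ for integers means $m=ac$ for some integer $c$ (so $0\mid m$ means $m=0$). *)

theory Defs
  imports Main
begin

text \<open>Central trinomial coefficient: constant term of (1 + x + 1/x)^n.\<close>
definition central_trinomial :: "nat \<Rightarrow> int" where
  "central_trinomial n = (\<Sum>k\<le>n div 2. int (n choose (2*k)) * int ((2*k) choose k))"

end

theory Submission
  imports Defs
begin

definition tt :: "nat \<Rightarrow> nat \<Rightarrow> int" where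
  "tt n k = int (n choose (2*k)) * int ((2*k) choose k)"

lemma tt_fact: "tt (u + 2*k) k * fact k ^ 2 * fact u = (fact (u+2*k) :: int)"
proof -
  have h1: "fact (2*k) * fact (u + 2*k - 2*k) * ((u+2*k) choose (2*k)) = (fact (u+2*k) :: nat)"
    by (rule binomial_fact_lemma) simp
  have h2: "fact k * fact (2*k - k) * ((2*k) choose k) = (fact (2*k) :: nat)"
    by (rule binomial_fact_lemma) simp
  have h2': "fact k * fact k * ((2*k) choose k) = (fact (2*k) :: nat)"
    using h2 by (simp add: mult_2)
  have h1': "fact (2*k) * fact u * ((u+2*k) choose (2*k)) = (fact (u+2*k) :: nat)"
    using h1 by simp
  have h1'': "(fact k * fact k * ((2*k) choose k)) * fact u * ((u+2*k) choose (2*k)) = (fact (u+2*k) :: nat)"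
    using h1' unfolding h2'[symmetric] .
  have "((u+2*k) choose (2*k)) * ((2*k) choose k) * fact k ^ 2 * fact u = (fact (u+2*k) :: nat)"
    using h1'' by (simp add: power2_eq_square mult_ac)
  then have "int (((u+2*k) choose (2*k)) * ((2*k) choose k) * fact k ^ 2 * fact u) = int (fact (u+2*k))"
    by simp
  then show ?thesis unfolding tt_def by (simp only: of_nat_mult of_nat_power of_nat_fact)
qed

lemma tt_zero: "n < 2*k \<Longrightarrow> tt n k = 0"
  unfolding tt_def by simp

lemma cancel_helper:
  fixes K A B C D a b c d :: int
  assumes "K \<noteq> 0" "K*A = a" "K*B = b" "K*C = c" "K*D = d"
    and "x*a = y*b - z*c + w*d"
  shows "x*A = y*B - z*C + w*D"
proof -
  have "K*(x*A) = x*(K*A)" "K*(y*B - z*C + w*D) = y*(K*B) - z*(K*C) + w*(K*D)"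
    by (simp_all add: algebra_simps)
  then have "K*(x*A) = K*(y*B - z*C + w*D)"
    using assms(2-6) by simp
  then show ?thesis using assms(1) by simp
qed

lemma fact2: "(fact (n+2) :: int) = (int n + 2) * (int n + 1) * fact n"
  by (simp add: algebra_simps)
lemma fact1: "(fact (n+1) :: int) = (int n + 1) * fact n"
  by (simp add: algebra_simps)

lemma kD_gen:
  assumes "tt n j * fact j ^ 2 * Z = (fact n :: int)"
  shows "fact (j+1) ^ 2 * Z * tt n j = (int j + 1)^2 * fact n"
proof -
  have "fact (j+1) ^ 2 * Z * tt n j = (int j + 1)^2 * (tt n j * fact j ^ 2 * Z)"
    unfolding fact1[of j] by (simp add: mult_ac power_mult_distrib)
  also have "\<dots> = (int j + 1)^2 * fact n" by (simp only: assms)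
  finally show ?thesis .
qed

lemma tt_rec:
  "int (n+2) * tt (n+2) (j+1) = int (2*n+3) * tt (n+1) (j+1) - int (n+1) * tt n (j+1) + (4 * int (n+1)) * tt n j"
proof -
  consider (a) u where "n = u + 2*j + 2" | (b) "n = 2*j+1" | (c) "n = 2*j" | (d) "n < 2*j"
    by (metis add.commute add_Suc_right le_add_diff_inverse less_Suc_eq linorder_not_le Suc_eq_plus1 nat_1_add_1 add.assoc)
  then show ?thesis
  proof cases
    case a
    have e1: "n+2 = (u+2) + 2*(j+1)" "n+1 = (u+1) + 2*(j+1)" "n = u + 2*(j+1)" "n = (u+2) + 2*j"
      using a by simp_all
    note fA = tt_fact[of "u+2" "j+1", folded e1(1)]
    note fB = tt_fact[of "u+1" "j+1", folded e1(2)]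
    note fC = tt_fact[of "u" "j+1", folded e1(3)]
    note fD = tt_fact[of "u+2" "j", folded e1(4)]
    define K :: int where "K = fact (j+1) ^ 2 * fact (u+2)"
    have K0: "K \<noteq> 0" unfolding K_def by simp
    have kA: "K * tt (n+2) (j+1) = fact (n+2)" using fA unfolding K_def by (simp add: mult_ac)
    have fu: "(fact (u+2) :: int) = (int u + 2) * fact (u+1)"
      using fact1[of "u+1"] by simp
    have "K * tt (n+1) (j+1) = (int u + 2) * (tt (n+1) (j+1) * fact (j+1) ^ 2 * fact (u+1))"
      unfolding K_def fu by (simp add: mult_ac)
    also have "\<dots> = (int u + 2) * fact (n+1)"
      by (simp only: fB)
    finally have kB: "K * tt (n+1) (j+1) = (int u + 2) * fact (n+1)" .
    have "K * tt n (j+1) = (int u + 2) * (int u + 1) * (tt n (j+1) * fact (j+1) ^ 2 * fact u)"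
      unfolding K_def fact2[of u] by (simp add: mult_ac)
    also have "\<dots> = (int u + 2) * (int u + 1) * fact n"
      by (simp only: fC)
    finally have kC: "K * tt n (j+1) = (int u + 2) * (int u + 1) * fact n" .
    have "K * tt n j = (int j + 1)^2 * (tt n j * fact j ^ 2 * fact (u+2))"
      unfolding K_def fact1[of j] by (simp add: mult_ac power_mult_distrib)
    also have "\<dots> = (int j + 1)^2 * fact n"
      by (simp only: fD)
    finally have kD: "K * tt n j = (int j + 1)^2 * fact n" .
    show ?thesis
      apply (rule cancel_helper[OF K0 kA kB kC kD])
      unfolding fact2[of n] fact1[of n] a by (simp add: algebra_simps power2_eq_square)
  next
    case b
    have e1: "n+2 = 1 + 2*(j+1)" "n+1 = 0 + 2*(j+1)" "n = 1 + 2*j"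
      using b by simp_all
    note fA = tt_fact[of "1" "j+1", folded e1(1)]
    note fB = tt_fact[of "0" "j+1", folded e1(2)]
    note fD = tt_fact[of "1" "j", folded e1(3)]
    define K :: int where "K = fact (j+1) ^ 2"
    have K0: "K \<noteq> 0" unfolding K_def by simp
    have kA: "K * tt (n+2) (j+1) = fact (n+2)" using fA unfolding K_def by (simp add: mult_ac)
    have kB: "K * tt (n+1) (j+1) = fact (n+1)" using fB unfolding K_def by (simp add: mult_ac)
    have kC: "K * tt n (j+1) = 0" using b tt_zero[of n "j+1"] by simp
    have kD: "K * tt n j = (int j + 1)^2 * fact n"
      using kD_gen[of n j 1] fD unfolding K_def by simp
    show ?thesis
      apply (rule cancel_helper[OF K0 kA kB kC kD])
      unfolding fact2[of n] fact1[of n] b by (simp add: algebra_simps power2_eq_square)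
  next
    case c
    have e1: "n+2 = 0 + 2*(j+1)" "n = 0 + 2*j"
      using c by simp_all
    note fA = tt_fact[of "0" "j+1", folded e1(1)]
    note fD = tt_fact[of "0" "j", folded e1(2)]
    define K :: int where "K = fact (j+1) ^ 2"
    have K0: "K \<noteq> 0" unfolding K_def by simp
    have kA: "K * tt (n+2) (j+1) = fact (n+2)" using fA unfolding K_def by (simp add: mult_ac)
    have kB: "K * tt (n+1) (j+1) = 0" using c tt_zero[of "n+1" "j+1"] by simp
    have kC: "K * tt n (j+1) = 0" using c tt_zero[of n "j+1"] by simp
    have kD: "K * tt n j = (int j + 1)^2 * fact n"
      using kD_gen[of n j 1] fD unfolding K_def by simp
    show ?thesis
      apply (rule cancel_helper[OF K0 kA kB kC kD])
      unfolding fact2[of n] fact1[of n] c by (simp add: algebra_simps power2_eq_square)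
  next
    case d
    then show ?thesis using tt_zero[of n j] tt_zero[of n "j+1"] tt_zero[of "n+1" "j+1"] tt_zero[of "n+2" "j+1"]
      by simp
  qed
qed

lemma T_tt:
  assumes "n div 2 \<le> N"
  shows "central_trinomial n = (\<Sum>k\<le>N. tt n k)"
proof -
  have "central_trinomial n = (\<Sum>k\<le>n div 2. tt n k)"
    unfolding central_trinomial_def tt_def ..
  also have "\<dots> = (\<Sum>k\<le>N. tt n k)"
    apply (rule sum.mono_neutral_left)
    using assms by (auto intro!: tt_zero)
  finally show ?thesis .
qed

lemma tt0: "tt m 0 = 1" unfolding tt_def by simp

lemma T_rec:
  "int (n+2) * central_trinomial (n+2) = int (2*n+3) * central_trinomial (n+1) + 3 * int (n+1) * central_trinomial n"
proof -
  have A: "central_trinomial (n+2) = 1 + (\<Sum>j\<le>n+1. tt (n+2) (j+1))"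
    using T_tt[of "n+2" "Suc (n+1)"] by (simp add: sum.atMost_Suc_shift tt0 del: sum.atMost_Suc)
  have B: "central_trinomial (n+1) = 1 + (\<Sum>j\<le>n+1. tt (n+1) (j+1))"
    using T_tt[of "n+1" "Suc (n+1)"] by (simp add: sum.atMost_Suc_shift tt0 del: sum.atMost_Suc)
  have C: "central_trinomial n = 1 + (\<Sum>j\<le>n+1. tt n (j+1))"
    using T_tt[of "n" "Suc (n+1)"] by (simp add: sum.atMost_Suc_shift tt0 del: sum.atMost_Suc)
  have D: "central_trinomial n = (\<Sum>j\<le>n+1. tt n j)"
    using T_tt[of "n" "n+1"] by simp
  have "int (n+2) * central_trinomial (n+2) = int (n+2) + (\<Sum>j\<le>n+1. int (n+2) * tt (n+2) (j+1))"
    unfolding A by (simp add: sum_distrib_left algebra_simps)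
  also have "\<dots> = int (n+2) + (\<Sum>j\<le>n+1. int (2*n+3) * tt (n+1) (j+1) - int (n+1) * tt n (j+1) + (4 * int (n+1)) * tt n j)"
    using tt_rec by simp
  also have "\<dots> = int (n+2) + int (2*n+3) * (\<Sum>j\<le>n+1. tt (n+1) (j+1)) - int (n+1) * (\<Sum>j\<le>n+1. tt n (j+1)) + (4 * int (n+1)) * (\<Sum>j\<le>n+1. tt n j)"
    by (simp only: sum.distrib sum_subtractf sum_distrib_left add_diff_eq diff_add_eq add.assoc)
  also have "\<dots> = int (2*n+3) * central_trinomial (n+1) + 3 * int (n+1) * central_trinomial n"
    unfolding B using C D by (simp add: algebra_simps)
  finally show ?thesis .
qed

definition Ssum :: "nat \<Rightarrow> int" where
  "Ssum n = (\<Sum>k<n. int k * (int k + 1) * (8 * int k + 9) * central_trinomial k * central_trinomial (k + 1))"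

definition Qf :: "int \<Rightarrow> int \<Rightarrow> int \<Rightarrow> int" where
  "Qf i b a = 6*(4*i^2+28*i+3)*b*a - (2*i-3)^2 * b^2 - 9*(2*i-1)^2*a^2"

lemma T01: "central_trinomial 0 = 1" "central_trinomial (Suc 0) = 1"
  unfolding central_trinomial_def by simp_all

lemma closed: "24 * Ssum (N+1) = (int N + 1)^2 * Qf (int N) (central_trinomial (N+1)) (central_trinomial N)"
proof (induction N)
  case 0
  then show ?case unfolding Ssum_def Qf_def by (simp add: T01)
next
  case (Suc N)
  define i where "i = int N"
  define a where "a = central_trinomial N"
  define b where "b = central_trinomial (N+1)"
  define c where "c = central_trinomial (N+2)"
  define P where "P = (i+2)*c"
  have rec: "P = (2*i+3)*b + 3*(i+1)*a"
    using T_rec[of N] unfolding P_def a_def b_def c_def i_def by (simp add: algebra_simps)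
  have IH: "24 * Ssum (N+1) = (i + 1)^2 * Qf i b a"
    using Suc.IH unfolding i_def a_def b_def by simp
  have S2: "Ssum (Suc N + 1) = Ssum (N+1) + (i+1)*(i+2)*(8*i+17)*b*c"
    unfolding Ssum_def i_def b_def c_def by (simp add: algebra_simps)
  have L: "24 * Ssum (Suc N + 1) = (i + 1)^2 * Qf i b a + 24*(i+1)*(8*i+17)*b*P"
    unfolding S2 P_def using IH by (simp add: algebra_simps)
  have R: "(int (Suc N) + 1)^2 * Qf (int (Suc N)) c b =
     6*(4*(i+1)^2+28*(i+1)+3)*(i+2)*P*b - (2*i-1)^2 * P^2 - 9*(2*i+1)^2*(i+2)^2*b^2"
    unfolding Qf_def P_def i_def by (simp add: algebra_simps power2_eq_square)
  have E: "(i + 1)^2 * Qf i b a + 24*(i+1)*(8*i+17)*b*P =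
     6*(4*(i+1)^2+28*(i+1)+3)*(i+2)*P*b - (2*i-1)^2 * P^2 - 9*(2*i+1)^2*(i+2)^2*b^2"
    unfolding rec Qf_def by (simp add: algebra_simps power2_eq_square)
  have cc: "central_trinomial (Suc N + 1) = c" "central_trinomial (Suc N) = b"
    by (simp_all add: c_def b_def)
  show ?case unfolding cc L R by (rule E)
qed

lemma central_binom_even: "even ((2*(j+1)) choose (j+1))"
proof -
  have "(2*(j+1)) choose (j+1) = Suc (2*j+1) choose Suc j" by simp
  also have "\<dots> = ((2*j+1) choose j) + ((2*j+1) choose (Suc j))" by (rule binomial_Suc_Suc)
  also have "(2*j+1) choose (Suc j) = (2*j+1) choose j"
    using binomial_symmetric[of "Suc j" "2*j+1"] by simp
  finally show ?thesis by simp
qed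

lemma T_odd: "odd (central_trinomial n)"
proof -
  have "central_trinomial n = 1 + (\<Sum>j\<le>n div 2. tt n (j+1))"
    using T_tt[of n "Suc (n div 2)"] by (simp add: sum.atMost_Suc_shift tt0 del: sum.atMost_Suc)
  moreover have "even (\<Sum>j\<le>n div 2. tt n (j+1))"
    apply (rule dvd_sum)
    unfolding tt_def using central_binom_even by (metis dvd_mult even_of_nat)
  ultimately show ?thesis by simp
qed

lemma six_dvd: "6 dvd (k::nat) * (k+1) * (k+2)"
proof (induction k)
  case 0 then show ?case by simp
next
  case (Suc k)
  have eq: "Suc k * (Suc k + 1) * (Suc k + 2) = k * (k+1) * (k+2) + 3 * ((k+1)*(k+2))"
    by (simp add: algebra_simps)
  have "even ((k+1)*(k+2))" by simp
  then obtain t where "(k+1)*(k+2) = 2*t" by (rule evenE)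
  then have "3 * ((k+1)*(k+2)) = 6 * t" by simp
  then have h: "6 dvd 3 * ((k+1)*(k+2))" by simp
  show ?case unfolding eq by (rule dvd_add[OF Suc.IH h])
qed

theorem theorem1p2:
  fixes n :: nat
  assumes "n \<ge> 1"
  shows "(int n ^ 2 * (int n ^ 2 - 1) div 6) dvd
    (\<Sum>k<n. int k * (int k + 1) * (8 * int k + 9) * central_trinomial k * central_trinomial (k + 1))"
proof (cases "n = 1")
  case True
  then show ?thesis by simp
next
  case False
  define N where "N = n - 2"
  have nN: "n = N + 2" using assms False unfolding N_def by simp
  have Seq: "(\<Sum>k<n. int k * (int k + 1) * (8 * int k + 9) * central_trinomial k * central_trinomial (k + 1)) = Ssum n"
    unfolding Ssum_def ..
  define i where "i = int N"
  define a where "a = central_trinomial (N+2)"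
  define b where "b = central_trinomial (N+1)"
  define c where "c = central_trinomial (Suc (Suc (Suc N)))"
  define e where "e = central_trinomial N"
  have cl: "24 * Ssum n = (i+2)^2 * Qf (i+1) a b"
    using closed[of "N+1"] unfolding nN i_def a_def b_def by (simp add: algebra_simps)
  have r1: "(i+3)*c = (2*i+5)*a + 3*(i+2)*b"
    using T_rec[of "N+1"] unfolding i_def a_def b_def c_def by (simp add: algebra_simps)
  have r2: "(i+2)*a = (2*i+3)*b + 3*(i+1)*e"
    using T_rec[of "N"] unfolding i_def a_def b_def e_def by (simp add: algebra_simps)
  define y where "y = 2*a+3*b-c"
  define x where "x = 2*b+3*e-a"
  have "(i+3)*y = (i+3)*(2*a+3*b) - (i+3)*c" unfolding y_def by (simp add: algebra_simps)
  also have "\<dots> = a + 3*b" unfolding r1 by (simp add: algebra_simps)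
  finally have hy: "(i+3)*y = a + 3*b" .
  have "(i+1)*x = 2*(i+1)*b + 3*(i+1)*e - (i+1)*a" unfolding x_def by (simp add: algebra_simps)
  also have "\<dots> = a - b" using r2 by (simp add: algebra_simps)
  finally have hx: "(i+1)*x = a - b" .
  have oa: "odd a" "odd b" "odd c" "odd e" unfolding a_def b_def c_def e_def by (simp_all add: T_odd)
  have "even y" unfolding y_def using oa by simp
  then obtain m where ym: "y = 2*m" by (rule evenE)
  have "even x" unfolding x_def using oa by simp
  then obtain l where xl: "x = 2*l" by (rule evenE)
  have h1: "(i+3)*(2*m) = a + 3*b" using hy ym by simp
  have h2: "(i+1)*(2*l) = a - b" using hx xl by simp
  have h1': "2*i*m + 6*m = a + 3*b" using h1 by (simp add: algebra_simps)
  have h2': "2*i*l + 2*l = a - b" using h2 by (simp add: algebra_simps)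
  have hb: "2*b = (i+3)*m - (i+1)*l"
  proof -
    have "(i+3)*m - (i+1)*l = i*m + 3*m - i*l - l" by (simp add: algebra_simps)
    then show ?thesis using h1' h2' by linarith
  qed
  have ha: "2*a = (i+3)*m + 3*(i+1)*l"
  proof -
    have "(i+3)*m + 3*(i+1)*l = i*m + 3*m + 3*(i*l) + 3*l" by (simp add: algebra_simps)
    then show ?thesis using h1' h2' by linarith
  qed
  define E where "E = 6*(2*i+9)*(i+1)*l*m - (i+3)*(2*i-25)*m^2 - 9*(i+1)*(2*i+3)*l^2"
  have "4 * Qf (i+1) a b = Qf (i+1) (2*a) (2*b)"
    unfolding Qf_def by (simp add: algebra_simps power2_eq_square)
  also have "\<dots> = 8*((i+2)^2-1)*E"
    unfolding ha hb Qf_def E_def by (simp add: algebra_simps power2_eq_square)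
  finally have "4 * Qf (i+1) a b = 8*((i+2)^2-1)*E" .
  moreover have "8*((i+2)^2-1)*E = 4 * (2*((i+2)^2-1)*E)" by (simp only: mult.assoc[symmetric])
  ultimately have "4 * Qf (i+1) a b = 4 * (2*((i+2)^2-1)*E)" by simp
  then have QE: "Qf (i+1) a b = 2*((i+2)^2-1)*E" by (simp only: mult_cancel_left) simp
  have evE: "even E"
  proof (cases "even i")
    case True
    have "even ((i+3)*m - (i+1)*l)" using hb by (metis dvd_triv_left)
    then have "even m = even l" using True by simp
    then show ?thesis unfolding E_def using True by simp
  next
    case False
    then show ?thesis unfolding E_def by simp
  qed
  then obtain q where Eq: "E = 2*q" by (rule evenE)
  have six: "6 * Ssum n = ((i+2)^2 * ((i+2)^2-1)) * q"
  proof -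
    have "4 * (6 * Ssum n) = 4 * (((i+2)^2 * ((i+2)^2-1)) * q)"
      using cl unfolding QE Eq by (simp add: algebra_simps)
    then show ?thesis by simp
  qed
  have in_eq: "int n = i + 2" unfolding nN i_def by simp
  have "(6::int) dvd int ((N+1)*(N+1+1)*(N+1+2))"
    unfolding int_dvd_int_iff[of 6, simplified] by (rule six_dvd)
  then have "(6::int) dvd (i+1)*(i+2)*(i+3)" unfolding i_def by (simp add: algebra_simps)
  then have "(6::int) dvd (i+2)^2 * ((i+2)^2-1)"
  proof -
    assume h: "(6::int) dvd (i+1)*(i+2)*(i+3)"
    have "(i+2)^2 * ((i+2)^2-1) = (i+2) * ((i+1)*(i+2)*(i+3))" by (simp add: algebra_simps power2_eq_square)
    then show ?thesis using h by simp
  qed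
  then obtain d where dd: "(i+2)^2 * ((i+2)^2-1) = 6*d" by (rule dvdE)
  have "Ssum n = d * q" using six unfolding dd by simp
  then show ?thesis unfolding Seq in_eq dd by simp
qed

end
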